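(* Consider the control system $\dot x=f(x,u)$, where $f\colon\mathcal{X}\times\mathcal{U}\to\mathbb{R}^n$ is continuous on a neighborhood $\mathcal{X}\times\mathcal{U}\subseteq\mathbb{R}^n\times\mathbb{R}^m$ of the origin with $f(0,0)=0$, let $d$ be a nonnegative function on a neighborhood of $0\in\mathbb{R}^n$, and suppose the system is locally asymptotically stabilizable and $u$ is a stabilizing feedback with $\|u(x)\|\le d(x)$ for all sufficiently small $\|x\|$. Write $F_u(x):=f(x,u(x))$, $$g_f(r):=\Gamma_0\big(f(\mathbb{B}_r(0,0))\big),\quad g_{F_u}(r):=\Gamma_0\big(F_u(\mathbb{B}_r(0))\big),\quad h(r):=\sup_{y\in\mathbb{B}_r(0)}\|F_u^{-1}(y)\|.$$ Then $$g_{F_u}\big(h(r)\big)\ \le\ g_f\left(\sqrt{\|d\|^2_{\mathbb{B}_{h(r)}(0)}+h(r)^2}\right)\quad\text{for all sufficiently small } r>0.$$ Moreover, $g_{F_u}(h(r))\ge r$ for all sufficiently small $r>0$, so that this condition implies $r\le g_f\big(\sqrt{\|d\|^2_{\mathbb{B}_{h(r)}(0)}+h(r)^2}\big)$ for all sufficiently small $r>0$.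
   Context: $\mathbb{B}_r(z)$ denotes the open ball of radius $r$ centered at $z$; on $\mathbb{R}^n\times\mathbb{R}^m$ the norm is $\|(x,u)\|=\sqrt{\|x\|^2+\|u\|^2}$. The inradius of a set $K$ at $z^*$ is $\Gamma_{z^*}(K)=\sup\{\rho\ge0:\mathbb{B}_\rho(z^* )\subseteq K\}$; $\|d\|_{\mathbb{B}_\rho(0)}:=\sup_{x\in\mathbb{B}_\rho(0)}d(x)$. A stabilizing feedback is a map $u\colon\mathcal{O}\to\mathcal{U}$ on a neighborhood $\mathcal{O}$ of the origin with $u(0)=0$ such that the origin is a locally asymptotically stable equilibrium of $\dot x=f(x,u(x))$, with $x\mapsto f(x,u(x))$ continuous and $\dot x=f(x,u(x))$ having a unique solution for all $t$ from every initial condition near the origin; the system is locally asymptotically stabilizable if such $u$ exists. For such $u$, $F_u$ restricted to a suitable neighborhood of the origin is a homeomorphism onto a neighborhood of the origin, and $F_u^{-1}$ denotes this local inverse. *)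

theory Defs
  imports "HOL-Analysis.Analysis" "HOL-Library.Extended_Real"
begin

text \<open>Inradius of K at z: sup of radii rho >= 0 with ball z rho contained in K
  (extended-real valued, so that it is always well defined).\<close>
definition inradius :: "'a::real_normed_vector \<Rightarrow> 'a set \<Rightarrow> ereal" where
  "inradius z K = (SUP \<rho> \<in> {\<rho>::real. \<rho> \<ge> 0 \<and> ball z \<rho> \<subseteq> K}. ereal \<rho>)"

definition eball0 :: "'a::real_normed_vector set \<Rightarrow> ereal \<Rightarrow> 'a set" where
  "eball0 S R = {x \<in> S. ereal (norm x) < R}"

definition is_solution :: "('a::real_normed_vector \<Rightarrow> 'a) \<Rightarrow> 'a set \<Rightarrow> 'a \<Rightarrow> (real \<Rightarrow> 'a) \<Rightarrow> bool" where
  "is_solution F Om x0 x \<longleftrightarrow> x 0 = x0 \<and>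
     (\<forall>t\<ge>0. x t \<in> Om \<and> (x has_vector_derivative F (x t)) (at t within {0..}))"

definition unique_solution :: "('a::real_normed_vector \<Rightarrow> 'a) \<Rightarrow> 'a set \<Rightarrow> 'a \<Rightarrow> bool" where
  "unique_solution F Om x0 \<longleftrightarrow> (\<exists>x. is_solution F Om x0 x \<and>
     (\<forall>y. is_solution F Om x0 y \<longrightarrow> (\<forall>t\<ge>0. y t = x t)))"

definition locally_asymptotically_stable :: "('a::real_normed_vector \<Rightarrow> 'a) \<Rightarrow> 'a set \<Rightarrow> bool" where
  "locally_asymptotically_stable F Om \<longleftrightarrow> F 0 = 0 \<and>
     (\<forall>\<epsilon>>0. \<exists>\<delta>>0. \<forall>x0\<in>ball 0 \<delta>. \<forall>x. is_solution F Om x0 x \<longrightarrow> (\<forall>t\<ge>0. norm (x t) < \<epsilon>)) \<and>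
     (\<exists>\<eta>>0. \<forall>x0\<in>ball 0 \<eta>. \<forall>x. is_solution F Om x0 x \<longrightarrow> (x \<longlongrightarrow> 0) at_top)"

definition stabilizing_feedback ::
  "('a::real_normed_vector \<times> 'b::real_normed_vector \<Rightarrow> 'a) \<Rightarrow> 'a set \<Rightarrow> 'b set \<Rightarrow> 'a set \<Rightarrow> ('a \<Rightarrow> 'b) \<Rightarrow> bool" where
  "stabilizing_feedback f X U Om u \<longleftrightarrow>
     open Om \<and> 0 \<in> Om \<and> Om \<subseteq> X \<and> u ` Om \<subseteq> U \<and> u 0 = 0 \<and>
     continuous_on Om (\<lambda>x. f (x, u x)) \<and>
     (\<exists>\<delta>>0. \<forall>x0\<in>ball 0 \<delta>. unique_solution (\<lambda>x. f (x, u x)) Om x0) \<and>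
     locally_asymptotically_stable (\<lambda>x. f (x, u x)) Om"

text \<open>sqrt(a^2 + b^2) for extended reals (negative values / -infinity, i.e. sups over
  empty sets, are treated as 0; an infinite argument gives infinity).\<close>
definition esqrt_sum :: "ereal \<Rightarrow> ereal \<Rightarrow> ereal" where
  "esqrt_sum a b = (if a = \<infinity> \<or> b = \<infinity> then \<infinity>
     else ereal (sqrt ((real_of_ereal (max a 0))\<^sup>2 + (real_of_ereal (max b 0))\<^sup>2)))"

end

theory Submission
  imports Defs
begin

lemma inradius_mono: "K \<subseteq> L \<Longrightarrow> inradius z K \<le> inradius z L"
  unfolding inradius_def by (rule SUP_subset_mono) auto

lemma inradius_ge: "r \<ge> 0 \<Longrightarrow> ball z r \<subseteq> K \<Longrightarrow> ereal r \<le> inradius z K"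
  unfolding inradius_def by (rule SUP_upper) auto

lemma open_not_max_norm:
  fixes G :: "'a::euclidean_space set"
  assumes "open G" "x \<in> G"
  shows "\<exists>x'\<in>G. norm x < norm x'"
proof -
  obtain e where e: "e > 0" "ball x e \<subseteq> G" using assms open_contains_ball by blast
  obtain b :: 'a where b: "b \<in> Basis" using nonempty_Basis by blast
  define v where "v = (if x = 0 then b else sgn x)"
  have nv: "norm v = 1" using b by (simp add: v_def norm_sgn)
  have xv: "x = norm x *\<^sub>R v" by (simp add: v_def sgn_div_norm)
  define x' where "x' = x + (e/2) *\<^sub>R v"
  have "x' = (norm x + e/2) *\<^sub>R v" unfolding x'_def by (subst xv) (simp add: algebra_simps)
  hence nx': "norm x' = norm x + e/2" using nv e by simp
  have "dist x x' < e" unfolding x'_def dist_norm using nv e by simp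
  hence "x' \<in> G" using e by auto
  moreover have "norm x < norm x'" using nx' e by simp
  ultimately show ?thesis by blast
qed

theorem theorem6:
  fixes f :: "'a::euclidean_space \<times> 'b::euclidean_space \<Rightarrow> 'a"
    and X :: "'a set" and U :: "'b set"
    and d :: "'a \<Rightarrow> real" and D :: "'a set"
    and u :: "'a \<Rightarrow> 'b" and Om :: "'a set"
    and W V :: "'a set" and g :: "'a \<Rightarrow> 'a"
  assumes "open X" "0 \<in> X" "open U" "0 \<in> U"
    and "continuous_on (X \<times> U) f" "f (0, 0) = 0"
    and "open D" "0 \<in> D" "\<forall>x\<in>D. d x \<ge> 0"
    and "stabilizing_feedback f X U Om u"
    and "\<exists>\<epsilon>>0. \<forall>x\<in>ball 0 \<epsilon>. norm (u x) \<le> d x"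
    and "open W" "0 \<in> W" "W \<subseteq> Om" "open V" "0 \<in> V"
    and "homeomorphism W V (\<lambda>x. f (x, u x)) g"
  shows "eventually (\<lambda>r.
      let h = (SUP y \<in> ball 0 r \<inter> V. ereal (norm (g y)));
          dn = (SUP x \<in> eball0 D h. ereal (d x));
          gf = (\<lambda>R. inradius 0 (f ` eball0 (X \<times> U) R));
          gFu = (\<lambda>R. inradius 0 ((\<lambda>x. f (x, u x)) ` eball0 Om R))
      in gFu h \<le> gf (esqrt_sum dn h) \<and> ereal r \<le> gFu h \<and> ereal r \<le> gf (esqrt_sum dn h))
    (at_right 0)"
proof -
  let ?F = "\<lambda>x. f (x, u x)"
  note hom = assms(17)
  have sf: "Om \<subseteq> X" "u ` Om \<subseteq> U" "u 0 = 0"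
    using assms(10) unfolding stabilizing_feedback_def by auto
  have g0: "g 0 = 0"
  proof -
    have "?F 0 = 0" using sf assms(6) by simp
    moreover have "g (?F 0) = 0" using hom assms(13) unfolding homeomorphism_def by blast
    ultimately show ?thesis by simp
  qed
  obtain \<epsilon> where eps: "\<epsilon> > 0" "\<forall>x\<in>ball 0 \<epsilon>. norm (u x) \<le> d x" using assms(11) by blast
  obtain eD where eD: "eD > 0" "ball 0 eD \<subseteq> D" using assms(7,8) open_contains_ball by blast
  define \<delta> where "\<delta> = min \<epsilon> eD"
  have dpos: "\<delta> > 0" using eps eD by (simp add: \<delta>_def)
  have gcont: "continuous_on V g" using hom unfolding homeomorphism_def by blast
  have "isCont g 0" using gcont assms(15,16) continuous_on_eq_continuous_at by blast
  then obtain r1 where r1: "r1 > 0" "\<forall>y. dist y 0 < r1 \<longrightarrow> dist (g y) (g 0) < \<delta>/2"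
    using dpos unfolding continuous_at_eps_delta by (metis half_gt_zero)
  obtain r2 where r2: "r2 > 0" "ball 0 r2 \<subseteq> V" using assms(15,16) open_contains_ball by blast
  define r0 where "r0 = min r1 r2"
  have r0: "r0 > 0" using r1 r2 by (simp add: r0_def)
  show ?thesis unfolding eventually_at_right[OF r0] Let_def
  proof (intro exI[of _ r0] conjI allI impI)
    fix r :: real assume r: "0 < r" "r < r0"
    have bV: "ball 0 r \<subseteq> V" using r r2 by (auto simp: r0_def)
    hence bI: "ball 0 r \<inter> V = ball 0 r" by auto
    define h where "h = (SUP y \<in> ball 0 r. ereal (norm (g y)))"
    have gsmall: "norm (g y) < \<delta>/2" if "y \<in> ball 0 r" for y
      using r1(2) that r g0 by (auto simp: r0_def dist_norm)
    have hle: "h \<le> ereal (\<delta>/2)" unfolding h_def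
      by (rule SUP_least) (use gsmall in \<open>auto intro: less_imp_le\<close>)
    have hstrict: "ereal (norm (g y)) < h" if y: "y \<in> ball 0 r" for y
    proof -
      have homs: "homeomorphism V W g ?F" using hom homeomorphism_sym by blast
      have "openin (top_of_set V) (ball 0 r)" using bV by (simp add: open_subset)
      hence "openin (top_of_set W) (g ` ball 0 r)" by (rule homeomorphism_imp_open_map[OF homs])
      hence "open (g ` ball 0 r)" using assms(12) openin_open_trans by blast
      then obtain x' where "x' \<in> g ` ball 0 r" "norm (g y) < norm x'"
        using open_not_max_norm y by blast
      then obtain y' where y': "y' \<in> ball 0 r" "norm (g y) < norm (g y')" by blast
      have A: "ereal (norm (g y')) \<le> h" unfolding h_def using y'(1) by (rule SUP_upper)
      have B: "ereal (norm (g y)) < ereal (norm (g y'))" using y' by simp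
      show ?thesis by (rule less_le_trans[OF B A])
    qed
    have hpos: "ereal 0 < h" using hstrict[of 0] r g0 by simp
    have hfin: "h \<noteq> \<infinity>" "h \<noteq> -\<infinity>" using hle hpos by auto
    define dn where "dn = (SUP x \<in> eball0 D h. ereal (d x))"
    define R where "R = esqrt_sum dn h"
    have small: "x \<in> D \<and> x \<in> ball 0 \<epsilon>" if "ereal (norm x) < h" for x
    proof -
      have "ereal (norm x) < ereal (\<delta>/2)" by (rule less_le_trans[OF that hle])
      hence "norm x < \<delta>/2" by simp
      thus ?thesis using eD dpos by (auto simp: \<delta>_def)
    qed
    have dnge: "ereal (d x) \<le> dn" if "ereal (norm x) < h" for x
      unfolding dn_def using small[OF that] that by (intro SUP_upper) (auto simp: eball0_def)
    have dn0': "ereal (d 0) \<le> dn" using dnge[of 0] hpos by simp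
    have "0 \<le> d 0" using assms(8,9) by blast
    hence "ereal 0 \<le> ereal (d 0)" by simp
    hence "ereal 0 \<le> dn" using dn0' by (rule order_trans)
    hence dn0: "0 \<le> dn" by (simp add: zero_ereal_def)
    have sub1: "ball 0 r \<subseteq> ?F ` eball0 Om h"
    proof
      fix y :: 'a assume y: "y \<in> ball 0 r"
      have "y = ?F (g y)" "g y \<in> W" using hom y bV unfolding homeomorphism_def by auto
      moreover have "g y \<in> eball0 Om h" using \<open>g y \<in> W\<close> assms(14) hstrict[OF y]
        by (auto simp: eball0_def)
      ultimately show "y \<in> ?F ` eball0 Om h" by blast
    qed
    have sub2: "?F ` eball0 Om h \<subseteq> f ` eball0 (X \<times> U) R"
    proof
      fix z assume "z \<in> ?F ` eball0 Om h"
      then obtain x where x: "x \<in> Om" "ereal (norm x) < h" "z = ?F x" by (auto simp: eball0_def)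
      have "norm (u x) \<le> d x" using eps(2) small[OF x(2)] by blast
      hence "ereal (norm (u x)) \<le> ereal (d x)" by simp
      hence nu: "ereal (norm (u x)) \<le> dn" using dnge[OF x(2)] by (rule order_trans)
      have "ereal (norm (x, u x)) < R"
      proof (cases "dn = \<infinity>")
        case True thus ?thesis by (simp add: R_def esqrt_sum_def)
      next
        case False
        then obtain dr where dr: "dn = ereal dr" "dr \<ge> 0" using dn0 by (cases dn) auto
        obtain hr where hr: "h = ereal hr" using hfin by (cases h) auto
        have a: "norm x < hr" using x(2) hr by simp
        have b: "norm (u x) \<le> dr" using nu dr by simp
        have "(norm x)\<^sup>2 < hr\<^sup>2" using a by (simp add: power_strict_mono)
        moreover have "(norm (u x))\<^sup>2 \<le> dr\<^sup>2" using b by (simp add: power_mono)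
        ultimately have "sqrt ((norm x)\<^sup>2 + (norm (u x))\<^sup>2) < sqrt (dr\<^sup>2 + hr\<^sup>2)" by simp
        moreover have "R = ereal (sqrt (dr\<^sup>2 + hr\<^sup>2))"
          using dr hr hpos by (simp add: R_def esqrt_sum_def max_def)
        ultimately show ?thesis by (simp add: norm_Pair)
      qed
      hence "(x, u x) \<in> eball0 (X \<times> U) R" using x sf by (auto simp: eball0_def)
      thus "z \<in> f ` eball0 (X \<times> U) R" using x by blast
    qed
    have A: "inradius 0 (?F ` eball0 Om h) \<le> inradius 0 (f ` eball0 (X \<times> U) R)"
      by (rule inradius_mono[OF sub2])
    have B: "ereal r \<le> inradius 0 (?F ` eball0 Om h)"
      using r sub1 by (intro inradius_ge) auto
    show "inradius 0 (?F ` eball0 Om (SUP y \<in> ball 0 r \<inter> V. ereal (norm (g y))))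
        \<le> inradius 0 (f ` eball0 (X \<times> U) (esqrt_sum (SUP x \<in> eball0 D (SUP y \<in> ball 0 r \<inter> V. ereal (norm (g y))). ereal (d x)) (SUP y \<in> ball 0 r \<inter> V. ereal (norm (g y)))))"
      using A unfolding bI h_def[symmetric] dn_def[symmetric] R_def[symmetric] .
    show "ereal r \<le> inradius 0 (?F ` eball0 Om (SUP y \<in> ball 0 r \<inter> V. ereal (norm (g y))))"
      using B unfolding bI h_def[symmetric] .
    show "ereal r \<le> inradius 0 (f ` eball0 (X \<times> U) (esqrt_sum (SUP x \<in> eball0 D (SUP y \<in> ball 0 r \<inter> V. ereal (norm (g y))). ereal (d x)) (SUP y \<in> ball 0 r \<inter> V. ereal (norm (g y)))))"
      using order_trans[OF B A] unfolding bI h_def[symmetric] dn_def[symmetric] R_def[symmetric] .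
  qed (rule r0)
qed

end
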